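(* Let $k$ be a commutative ring and $A$ a commutative $k$-algebra such that $\operatorname{Der}_k(A)$ is a finitely generated $A$-module and $\operatorname{Ider}_k(A)=\operatorname{Der}_k(A)$. Then for each integer $m\ge1$, every Hasse–Schmidt derivation $D'\in\operatorname{HS}_k(A;m)$ is $(m+1)$-integrable, i.e. there exists $D\in\operatorname{HS}_k(A;m+1)$ with $\tau_{m+1,m}(D)=D'$; consequently every $D'\in\operatorname{HS}_k(A;m)$ is integrable (is the truncation of some element of $\operatorname{HS}_k(A;\infty)$).
   Context: For $m\ge1$ an integer or $m=\infty$, a Hasse–Schmidt derivation of $A$ over $k$ of length $m$ is a sequence $D=(D_0,\dots,D_m)$ of $k$-linear maps $A\to A$ with $D_0=\mathrm{Id}_A$ and $D_i(xy)=\sum_{r+s=i}D_r(x)D_s(y)$; their set is $\operatorname{HS}_k(A;m)$. For $m\le q$, $\tau_{qm}(D)=(D_0,\dots,D_m)$. A derivation $\delta\in\operatorname{Der}_k(A)$ is integrable if $\delta=D_1$ for some $D\in\operatorname{HS}_k(A;\infty)$; $\operatorname{Ider}_k(A)$ denotes the set of integrable derivations. An element $D'\in\operatorname{HS}_k(A;m)$ is $q$-integrable ($q\ge m$) if $D'=\tau_{qm}(D)$ for some $D\in\operatorname{HS}_k(A;q)$. *)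

theory Defs
  imports Main "HOL-Library.Extended_Nat"
begin

text \<open>A commutative k-algebra A is modelled by a commutative ring type 'a together with
  a ring homomorphism (structure map) phi from the commutative ring type 'k to 'a.\<close>

definition alg_map :: "('k::comm_ring_1 \<Rightarrow> 'a::comm_ring_1) \<Rightarrow> bool" where
  "alg_map phi \<longleftrightarrow> phi 1 = 1 \<and> (\<forall>a b. phi (a + b) = phi a + phi b) \<and>
                      (\<forall>a b. phi (a * b) = phi a * phi b)"

definition k_linear :: "('k::comm_ring_1 \<Rightarrow> 'a::comm_ring_1) \<Rightarrow> ('a \<Rightarrow> 'a) \<Rightarrow> bool" where
  "k_linear phi f \<longleftrightarrow> (\<forall>x y. f (x + y) = f x + f y) \<and> (\<forall>c x. f (phi c * x) = phi c * f x)"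

definition Der :: "('k::comm_ring_1 \<Rightarrow> 'a::comm_ring_1) \<Rightarrow> ('a \<Rightarrow> 'a) set" where
  "Der phi = {d. k_linear phi d \<and> (\<forall>x y. d (x * y) = x * d y + y * d x)}"

definition Der_fin_gen :: "('k::comm_ring_1 \<Rightarrow> 'a::comm_ring_1) \<Rightarrow> bool" where
  "Der_fin_gen phi \<longleftrightarrow> (\<exists>S. finite S \<and> S \<subseteq> Der phi \<and>
      (\<forall>d \<in> Der phi. \<exists>c :: ('a \<Rightarrow> 'a) \<Rightarrow> 'a. d = (\<lambda>x. \<Sum>e\<in>S. c e * e x)))"

text \<open>Hasse--Schmidt derivations of length m (m a natural number or \<infinity>), as sequences
  D :: nat \<Rightarrow> A \<Rightarrow> A; only the components D i with i \<le> m are relevant.\<close>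
definition HS :: "('k::comm_ring_1 \<Rightarrow> 'a::comm_ring_1) \<Rightarrow> enat \<Rightarrow> (nat \<Rightarrow> 'a \<Rightarrow> 'a) \<Rightarrow> bool" where
  "HS phi m D \<longleftrightarrow> D 0 = id \<and>
     (\<forall>i. enat i \<le> m \<longrightarrow> k_linear phi (D i) \<and>
         (\<forall>x y. D i (x * y) = (\<Sum>r\<le>i. D r x * D (i - r) y)))"

definition truncates_to :: "nat \<Rightarrow> (nat \<Rightarrow> 'a \<Rightarrow> 'a) \<Rightarrow> (nat \<Rightarrow> 'a \<Rightarrow> 'a) \<Rightarrow> bool" where
  "truncates_to m D D' \<longleftrightarrow> (\<forall>i\<le>m. D i = D' i)"

definition Ider :: "('k::comm_ring_1 \<Rightarrow> 'a::comm_ring_1) \<Rightarrow> ('a \<Rightarrow> 'a) set" where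
  "Ider phi = {d. d \<in> Der phi \<and> (\<exists>D. HS phi \<infinity> D \<and> D 1 = d)}"

end

theory Submission
  imports Defs
begin

lemma kl_zero: "k_linear phi f \<Longrightarrow> f 0 = 0"
  unfolding k_linear_def by (metis add.right_neutral add_left_cancel)

lemma kl_sum: "k_linear phi f \<Longrightarrow> f (sum g A) = (\<Sum>i\<in>A. f (g i))"
  by (induction A rule: infinite_finite_induct) (auto simp: kl_zero k_linear_def)

lemma kl_comp_sum:
  assumes "\<forall>a\<in>A. k_linear phi (f a) \<and> k_linear phi (g a)"
  shows "k_linear phi (\<lambda>x. \<Sum>a\<in>A. f a (g a x))"
  using assms unfolding k_linear_def by (simp add: sum.distrib sum_distrib_left)

lemma L1: "(\<Sum>a\<le>n. \<Sum>e\<le>a. (G::nat\<Rightarrow>nat\<Rightarrow>'b::comm_monoid_add) a e)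
         = (\<Sum>e\<le>n. \<Sum>f\<le>n-e. G (e+f) e)"
  apply (simp add: sum.Sigma)
  apply (rule sum.reindex_bij_witness[where i="\<lambda>(e,f). (e+f,e)" and j="\<lambda>(a,e). (e,a-e)"])
  apply auto
  done

lemma L2: "(\<Sum>f\<le>m. \<Sum>c\<le>m-f. (K::nat\<Rightarrow>nat\<Rightarrow>'b::comm_monoid_add) c f)
         = (\<Sum>c\<le>m. \<Sum>f\<le>m-c. K c f)"
  apply (simp add: sum.Sigma)
  apply (rule sum.reindex_bij_witness[where i="\<lambda>(c,f). (f,c)" and j="\<lambda>(f,c). (c,f)"])
  apply auto
  done

definition comp :: "(nat \<Rightarrow> 'a \<Rightarrow> 'a::comm_ring_1) \<Rightarrow> (nat \<Rightarrow> 'a \<Rightarrow> 'a) \<Rightarrow> nat \<Rightarrow> 'a \<Rightarrow> 'a" where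
  "comp E F n = (\<lambda>x. \<Sum>a\<le>n. E a (F (n-a) x))"

definition frob :: "nat \<Rightarrow> (nat \<Rightarrow> 'a \<Rightarrow> 'a::comm_ring_1) \<Rightarrow> nat \<Rightarrow> 'a \<Rightarrow> 'a" where
  "frob s G n = (if s dvd n then G (n div s) else (\<lambda>x. 0))"

lemma HS_inf: "HS phi \<infinity> D \<longleftrightarrow> D 0 = id \<and> (\<forall>i. k_linear phi (D i) \<and>
         (\<forall>x y. D i (x * y) = (\<Sum>r\<le>i. D r x * D (i - r) y)))"
  unfolding HS_def by simp

lemma comp_leib:
  assumes EL: "\<And>i. k_linear phi (E i)" and EM: "\<And>i x y. E i (x*y) = (\<Sum>r\<le>i. E r x * E (i-r) y)"
    and FL: "\<And>i. k_linear phi (F i)" and FM: "\<And>i x y. F i (x*y) = (\<Sum>r\<le>i. F r x * F (i-r) y)"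
  shows "comp E F n (x*y) = (\<Sum>r\<le>n. comp E F r x * comp E F (n-r) y)"
proof -
  define P where "P c e = E e (F c x)" for c e
  define Q where "Q d f = E f (F d y)" for d f
  have "comp E F n (x*y) = (\<Sum>a\<le>n. \<Sum>c\<le>n-a. E a (F c x * F (n-a-c) y))"
    unfolding comp_def FM by (simp add: kl_sum[OF EL])
  also have "\<dots> = (\<Sum>a\<le>n. \<Sum>c\<le>n-a. \<Sum>e\<le>a. P c e * Q (n-a-c) (a-e))"
    unfolding EM P_def Q_def ..
  also have "\<dots> = (\<Sum>a\<le>n. \<Sum>e\<le>a. \<Sum>c\<le>n-a. P c e * Q (n-a-c) (a-e))"
    by (simp add: sum.swap[where A="{..n-_}"])
  also have "\<dots> = (\<Sum>e\<le>n. \<Sum>f\<le>n-e. \<Sum>c\<le>n-(e+f). P c e * Q (n-(e+f)-c) f)"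
    by (subst L1) simp
  also have "\<dots> = (\<Sum>e\<le>n. \<Sum>f\<le>n-e. \<Sum>c\<le>(n-e)-f. P c e * Q ((n-e)-c-f) f)"
    apply (intro sum.cong refl arg_cong2[where f="(*)"] arg_cong2[where f=Q])
     apply (simp add: diff_diff_left)
    apply (simp only: diff_diff_left add.commute add.left_commute)
    done
  also have "\<dots> = (\<Sum>e\<le>n. \<Sum>c\<le>n-e. \<Sum>f\<le>(n-e)-c. P c e * Q ((n-e)-c-f) f)"
    by (subst L2) simp
  also have "\<dots> = (\<Sum>e\<le>n. \<Sum>c\<le>n-e. \<Sum>f\<le>n-(e+c). P ((e+c)-e) e * Q (n-(e+c)-f) f)"
    apply (intro sum.cong refl arg_cong2[where f="(*)"] arg_cong2[where f=Q] arg_cong2[where f=P])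
       apply (simp_all only: diff_diff_left)
    done
  also have "\<dots> = (\<Sum>r\<le>n. \<Sum>e\<le>r. \<Sum>f\<le>n-r. P (r-e) e * Q (n-r-f) f)"
    by (subst L1) simp
  also have "\<dots> = (\<Sum>r\<le>n. (\<Sum>e\<le>r. P (r-e) e) * (\<Sum>f\<le>n-r. Q (n-r-f) f))"
    by (intro sum.cong refl) (simp only: sum_product)
  also have "\<dots> = (\<Sum>r\<le>n. comp E F r x * comp E F (n-r) y)"
    unfolding comp_def P_def Q_def ..
  finally show ?thesis .
qed

lemma HS_comp:
  assumes "HS phi \<infinity> E" "HS phi \<infinity> F"
  shows "HS phi \<infinity> (comp E F)"
proof -
  have A: "E 0 = id \<and> (\<forall>i. k_linear phi (E i) \<and> (\<forall>x y. E i (x * y) = (\<Sum>r\<le>i. E r x * E (i - r) y)))"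
     "F 0 = id \<and> (\<forall>i. k_linear phi (F i) \<and> (\<forall>x y. F i (x * y) = (\<Sum>r\<le>i. F r x * F (i - r) y)))"
    using assms unfolding HS_inf by auto
  show ?thesis unfolding HS_inf
  proof (intro conjI allI)
  show "comp E F 0 = id" using A by (auto simp: comp_def)
  fix i
  show "k_linear phi (comp E F i)" unfolding comp_def using A by (intro kl_comp_sum) auto
  fix x y
  show "comp E F i (x * y) = (\<Sum>r\<le>i. comp E F r x * comp E F (i - r) y)"
    by (rule comp_leib[of phi]) (use A in auto)
qed
qed

lemma k_linear_zero: "k_linear phi (\<lambda>x. 0)"
  unfolding k_linear_def by simp

lemma k_linear_id: "k_linear phi id"
  unfolding k_linear_def by simp

lemma HS_frob:
  assumes G: "HS phi \<infinity> G" and s: "s > 0"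
  shows "HS phi \<infinity> (frob s G)"
  unfolding HS_inf
proof (intro conjI allI)
  have GL: "\<And>i. k_linear phi (G i)" and GM: "\<And>i x y. G i (x*y) = (\<Sum>r\<le>i. G r x * G (i-r) y)"
    and G0: "G 0 = id" using G unfolding HS_inf by auto
  show "frob s G 0 = id" using G0 by (simp add: frob_def)
  fix n x y
  show "k_linear phi (frob s G n)" by (simp add: frob_def k_linear_zero GL)
  define h where "h r = frob s G r x * frob s G (n-r) y" for r
  show "frob s G n (x * y) = (\<Sum>r\<le>n. frob s G r x * frob s G (n - r) y)"
  proof (cases "s dvd n")
    case True
    then obtain l where l: "n = s*l" by blast
    have "(\<Sum>r\<le>n. h r) = (\<Sum>r\<in>(\<lambda>j. s*j) ` {..l}. h r)"
    proof (rule sum.mono_neutral_right)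
      show "(\<lambda>j. s*j) ` {..l} \<subseteq> {..n}" using l by auto
      show "\<forall>i\<in>{..n} - (\<lambda>j. s*j) ` {..l}. h i = 0"
      proof
        fix i assume i: "i \<in> {..n} - (\<lambda>j. s*j) ` {..l}"
        have "\<not> s dvd i"
        proof
          assume "s dvd i" then obtain j where "i = s*j" by blast
          with i l s show False by auto
        qed
        then show "h i = 0" by (simp add: h_def frob_def)
      qed
    qed simp
    also have "\<dots> = (\<Sum>j\<le>l. h (s*j))"
      by (subst sum.reindex) (use s in \<open>auto simp: inj_on_def\<close>)
    also have "\<dots> = (\<Sum>j\<le>l. G j x * G (l-j) y)"
    proof (intro sum.cong refl)
      fix j assume "j \<in> {..l}"
      have "n - s*j = s*(l-j)" using l by (simp add: right_diff_distrib')
      then show "h (s*j) = G j x * G (l-j) y" using s by (simp add: h_def frob_def)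
    qed
    finally show ?thesis using True l s by (simp add: h_def frob_def GM)
  next
    case False
    have "h r = 0" if "r \<le> n" for r
    proof -
      have "\<not> (s dvd r \<and> s dvd (n-r))"
      proof
        assume "s dvd r \<and> s dvd (n-r)"
        then have "s dvd (r + (n-r))" by (intro dvd_add) auto
        with that False show False by simp
      qed
      then show ?thesis by (auto simp: h_def frob_def)
    qed
    then have "(\<Sum>r\<le>n. h r) = 0" by simp
    then show ?thesis using False by (simp add: h_def frob_def)
  qed
qed

lemma HS_triv: fixes phi :: "'k::comm_ring_1 \<Rightarrow> 'a::comm_ring_1" shows "HS phi \<infinity> (\<lambda>n. if n = 0 then id else (\<lambda>x. 0))"
  unfolding HS_inf
proof (intro conjI allI)
  fix i :: nat and x y :: 'a
  show "k_linear phi (if i = 0 then id else (\<lambda>x. 0))"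
    by (simp add: k_linear_id k_linear_zero)
  have "(\<Sum>r\<le>i. (if r = 0 then id else (\<lambda>x. 0)) x * (if i - r = 0 then id else (\<lambda>x. 0)) y)
      = (\<Sum>r\<le>i. if r = 0 then (if i = 0 then x * y else 0) else 0)"
    by (intro sum.cong refl) auto
  also have "\<dots> = (if i = 0 then x * y else 0)" by (simp add: sum.delta)
  finally show "(if i = 0 then id else (\<lambda>x. 0)) (x * y) =
     (\<Sum>r\<le>i. (if r = 0 then id else (\<lambda>x. 0)) x * (if i - r = 0 then id else (\<lambda>x. 0)) y)"
    by simp
qed simp

theorem mainTheorem2:
  fixes phi :: "'k::comm_ring_1 \<Rightarrow> 'a::comm_ring_1"
  assumes "alg_map phi"
    and "Der_fin_gen phi"
    and "Ider phi = Der phi"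
    and "m \<ge> 1"
    and "HS phi (enat m) D'"
  shows "(\<exists>D. HS phi (enat (m + 1)) D \<and> truncates_to m D D') \<and>
         (\<exists>D. HS phi \<infinity> D \<and> truncates_to m D D')"
proof -
  have D0: "D' 0 = id" and DL: "\<And>i. i \<le> m \<Longrightarrow> k_linear phi (D' i)"
    and DM: "\<And>i x y. i \<le> m \<Longrightarrow> D' i (x*y) = (\<Sum>r\<le>i. D' r x * D' (i-r) y)"
    using assms(5) unfolding HS_def by auto
  have claim: "j \<le> m \<longrightarrow> (\<exists>E. HS phi \<infinity> E \<and> (\<forall>i\<le>j. E i = D' i))" for j
  proof (induction j)
    case 0
    show ?case using HS_triv[of phi] D0 by (intro impI exI[of _ "\<lambda>n. if n = 0 then id else (\<lambda>x. 0)"]) auto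
  next
    case (Suc j)
    show ?case
    proof
      assume jm: "Suc j \<le> m"
      then obtain E where E: "HS phi \<infinity> E" and EA: "\<forall>i\<le>j. E i = D' i" using Suc by auto
      have E0: "E 0 = id" and EL: "\<And>i. k_linear phi (E i)"
        and EM: "\<And>i x y. E i (x*y) = (\<Sum>r\<le>i. E r x * E (i-r) y)"
        using E unfolding HS_inf by auto
      define \<delta> where "\<delta> x = D' (Suc j) x - E (Suc j) x" for x
      have "\<delta> \<in> Der phi"
        unfolding Der_def
      proof (intro CollectI conjI allI)
        show "k_linear phi \<delta>" using DL[OF jm] EL[of "Suc j"]
          unfolding k_linear_def \<delta>_def by (simp add: algebra_simps)
        fix x y
        have "\<delta> (x*y) = (\<Sum>r\<le>Suc j. D' r x * D' (Suc j - r) y - E r x * E (Suc j - r) y)"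
          unfolding \<delta>_def DM[OF jm] EM by (simp add: sum_subtractf)
        also have "\<dots> = (\<Sum>r\<le>Suc j. (if r = 0 then x * \<delta> y else 0) + (if r = Suc j then \<delta> x * y else 0))"
        proof (intro sum.cong refl)
          fix r assume r: "r \<in> {..Suc j}"
          show "D' r x * D' (Suc j - r) y - E r x * E (Suc j - r) y =
            (if r = 0 then x * \<delta> y else 0) + (if r = Suc j then \<delta> x * y else 0)"
          proof (cases "r = 0")
            case True then show ?thesis using D0 E0 by (simp add: \<delta>_def algebra_simps)
          next
            case False
            show ?thesis
            proof (cases "r = Suc j")
              case True then show ?thesis using D0 E0 by (simp add: \<delta>_def algebra_simps)
            next
              case False2: False
              with False r EA show ?thesis by auto
            qed
          qed
        qed
        also have "\<dots> = x * \<delta> y + \<delta> x * y"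
          by (simp add: sum.distrib sum.delta)
        finally show "\<delta> (x*y) = x * \<delta> y + y * \<delta> x" by (simp add: ac_simps)
      qed
      then have "\<delta> \<in> Ider phi" using assms(3) by simp
      then obtain G where G: "HS phi \<infinity> G" and G1: "G 1 = \<delta>" unfolding Ider_def by auto
      have G0: "G 0 = id" using G unfolding HS_inf by auto
      define F where "F = frob (Suc j) G"
      have F: "HS phi \<infinity> F" unfolding F_def by (rule HS_frob[OF G]) simp
      have C: "HS phi \<infinity> (comp E F)" by (rule HS_comp[OF E F])
      have "\<forall>i\<le>Suc j. comp E F i = D' i"
      proof (intro allI impI ext)
        fix i x assume i: "i \<le> Suc j"
        have "comp E F i x = (\<Sum>a\<le>i. (if a = i then E i x else 0) +
                  (if a = 0 then (if i = Suc j then \<delta> x else 0) else 0))"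
          unfolding comp_def
        proof (intro sum.cong refl)
          fix a assume a: "a \<in> {..i}"
          show "E a (F (i - a) x) = (if a = i then E i x else 0) +
                  (if a = 0 then (if i = Suc j then \<delta> x else 0) else 0)"
          proof (cases "i - a = 0")
            case True
            then have "a = i" using a by auto
            then show ?thesis using G0 i by (auto simp: F_def frob_def)
          next
            case False
            show ?thesis
            proof (cases "Suc j dvd (i - a)")
              case True
              then obtain q where q: "i - a = Suc j * q" by blast
              with False have "q \<ge> 1" by (cases q) auto
              then have "Suc j * q \<ge> Suc j" using mult_le_mono2[of 1 q "Suc j"] by simp
              with q i have "Suc j * q = Suc j" by linarith
              then have "q = 1" by (metis mult.right_neutral mult_left_cancel nat.distinct(1))
              with q have "i - a = Suc j" by simp
              then have "a = 0" "i = Suc j" using i by auto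
              then show ?thesis using True q \<open>q = 1\<close> G1 E0 by (simp add: F_def frob_def)
            next
              case False2: False
              then show ?thesis using False kl_zero[OF EL[of a]] by (auto simp: F_def frob_def)
            qed
          qed
        qed
        also have "\<dots> = E i x + (if i = Suc j then \<delta> x else 0)"
          by (simp add: sum.distrib sum.delta)
        also have "\<dots> = D' i x"
          using EA i by (cases "i = Suc j") (auto simp: \<delta>_def)
        finally show "comp E F i x = D' i x" .
      qed
      with C show "\<exists>E. HS phi \<infinity> E \<and> (\<forall>i\<le>Suc j. E i = D' i)" by blast
    qed
  qed
  then obtain E where E: "HS phi \<infinity> E" and EA: "\<forall>i\<le>m. E i = D' i" by blast
  have "HS phi (enat (m+1)) E" using E unfolding HS_def by auto
  then show ?thesis using E EA unfolding truncates_to_def by blast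
qed

end
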